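(* The class of data languages accepted by SAFA is not closed under intersection: there exist data languages $L_1,L_2\subseteq(\Sigma\times D)^*$, each accepted by some SAFA, such that no SAFA accepts $L_1\cap L_2$.
   Context: $D$ is a fixed countably infinite set of data values; for a finite alphabet $\Sigma$, data words are elements of $(\Sigma\times D)^*$. A set augmented finite automaton (SAFA) is a tuple $M=(Q,\Sigma\times D,q_0,F,H,\delta)$: $Q$ finite set of states, $q_0\in Q$ initial, $F\subseteq Q$ final, $H=\{h_1,\dots,h_m\}$ a finite collection of (names of) sets of data values, $\delta\subseteq Q\times\Sigma\times C\times OP\times Q$ with $C=\{p(h_i),\,!p(h_i): h_i\in H\}$, $OP=\{-\}\cup\{\mathsf{ins}(h_i):h_i\in H\}$. Configurations are $(q,\langle S_1,\dots,S_m\rangle)$ with $S_i\subseteq D$ finite; initially state $q_0$ and all sets empty. On reading $(a,d)$, a transition $(q,a,\alpha,op,q')$ from the current state may be taken if $\alpha=p(h_i)$ and $d\in S_i$, or $\alpha=\,!p(h_i)$ and $d\notin S_i$; then the state becomes $q'$ and if $op=\mathsf{ins}(h_j)$ the value $d$ is added to $S_j$ ($op=-$ changes nothing). A word is accepted if some run reads it entirely and ends in $F$; $L(M)$ is the set of accepted words. *)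

theory Defs
  imports Main
begin

text \<open>States of an automaton are natural numbers (a finite set Q of them);
  the set names h_1..h_m are the indices 0..<m.\<close>

type_synonym data = nat
type_synonym 'a dword = "('a \<times> data) list"

datatype cond = Mem nat | NotMem nat
datatype oper = NoOp | Ins nat

record 'a safa =
  states :: "nat set"
  init   :: nat
  final  :: "nat set"
  nsets  :: nat
  trans  :: "(nat \<times> 'a \<times> cond \<times> oper \<times> nat) set"

fun cond_idx :: "cond \<Rightarrow> nat" where
  "cond_idx (Mem i) = i" | "cond_idx (NotMem i) = i"

fun oper_ok :: "nat \<Rightarrow> oper \<Rightarrow> bool" where
  "oper_ok m NoOp = True" | "oper_ok m (Ins j) = (j < m)"

definition wf_safa :: "('a::finite) safa \<Rightarrow> bool" where
  "wf_safa M \<longleftrightarrow> finite (states M) \<and> init M \<in> states M \<and> final M \<subseteq> states M \<and>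
     (\<forall>(q,a,\<alpha>,op,q') \<in> trans M. q \<in> states M \<and> q' \<in> states M \<and>
        cond_idx \<alpha> < nsets M \<and> oper_ok (nsets M) op)"

fun sat :: "cond \<Rightarrow> (nat \<Rightarrow> data set) \<Rightarrow> data \<Rightarrow> bool" where
  "sat (Mem i) S d = (d \<in> S i)"
| "sat (NotMem i) S d = (d \<notin> S i)"

fun apply_op :: "oper \<Rightarrow> (nat \<Rightarrow> data set) \<Rightarrow> data \<Rightarrow> (nat \<Rightarrow> data set)" where
  "apply_op NoOp S d = S"
| "apply_op (Ins j) S d = S(j := insert d (S j))"

type_synonym config = "nat \<times> (nat \<Rightarrow> data set)"

inductive run :: "'a safa \<Rightarrow> config \<Rightarrow> 'a dword \<Rightarrow> config \<Rightarrow> bool" for M where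
  run_nil: "run M c [] c"
| run_cons: "\<lbrakk> (q, a, \<alpha>, op, q') \<in> trans M; sat \<alpha> S d;
              run M (q', apply_op op S d) w c' \<rbrakk>
             \<Longrightarrow> run M (q, S) ((a, d) # w) c'"

definition lang :: "'a safa \<Rightarrow> 'a dword set" where
  "lang M = {w. \<exists>q S. run M (init M, \<lambda>_. {}) w (q, S) \<and> q \<in> final M}"

definition safa_recognizable :: "('a::finite) dword set \<Rightarrow> bool" where
  "safa_recognizable L \<longleftrightarrow> (\<exists>M. wf_safa M \<and> lang M = L)"

end

theory Submission imports Defs begin

lemma run_Nil_iff: "run M c [] c' \<longleftrightarrow> c' = c"
  by (auto elim: run.cases intro: run.intros)

lemma run_Cons_iff: "run M (q,S) ((a,d)#w) c \<longleftrightarrow>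
  (\<exists>\<alpha> op q'. (q,a,\<alpha>,op,q') \<in> trans M \<and> sat \<alpha> S d \<and> run M (q', apply_op op S d) w c)"
  by (rule iffI, erule run.cases, auto intro: run.intros)

lemma lang4: "[(a1,x1),(a2,x2),(a3,x3),(a4,x4)] \<in> lang M \<longleftrightarrow>
  (\<exists>\<alpha>1 op1 q1 \<alpha>2 op2 q2 \<alpha>3 op3 q3 \<alpha>4 op4 q4.
     (init M,a1,\<alpha>1,op1,q1) \<in> trans M \<and> sat \<alpha>1 (\<lambda>_. {}) x1 \<and>
     (q1,a2,\<alpha>2,op2,q2) \<in> trans M \<and> sat \<alpha>2 (apply_op op1 (\<lambda>_. {}) x1) x2 \<and>
     (q2,a3,\<alpha>3,op3,q3) \<in> trans M \<and> sat \<alpha>3 (apply_op op2 (apply_op op1 (\<lambda>_. {}) x1) x2) x3 \<and>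
     (q3,a4,\<alpha>4,op4,q4) \<in> trans M \<and> sat \<alpha>4 (apply_op op3 (apply_op op2 (apply_op op1 (\<lambda>_. {}) x1) x2) x3) x4 \<and>
     q4 \<in> final M)"
  unfolding lang_def by (simp add: run_Cons_iff run_Nil_iff) blast

definition Lint :: "'a dword set" where
  "Lint = {w. \<exists>a1 a2 a3 a4 x1 x2 x3 x4. w = [(a1,x1),(a2,x2),(a3,x3),(a4,x4)] \<and>
      x1 \<noteq> x2 \<and> x3 \<noteq> x1 \<and> x3 \<noteq> x2 \<and> x4 = x2}"

lemma apply_op_sub: "x \<in> S i \<Longrightarrow> x \<in> apply_op op S d i"
  by (cases op) auto

lemma not_rec: "\<not> safa_recognizable (Lint :: ('a::finite) dword set)"
proof
  assume "safa_recognizable (Lint :: 'a dword set)"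
  then obtain M :: "'a safa" where L: "lang M = Lint" unfolding safa_recognizable_def by blast
  define a :: 'a where "a = undefined"
  have "[(a,1),(a,2),(a,3),(a,2)] \<in> lang M" unfolding L Lint_def by auto
  then obtain \<alpha>1 op1 q1 \<alpha>2 op2 q2 \<alpha>3 op3 q3 \<alpha>4 op4 q4 where
    t1: "(init M,a,\<alpha>1,op1,q1) \<in> trans M" and s1: "sat \<alpha>1 (\<lambda>_. {}) 1" and
    t2: "(q1,a,\<alpha>2,op2,q2) \<in> trans M" and s2: "sat \<alpha>2 (apply_op op1 (\<lambda>_. {}) 1) 2" and
    t3: "(q2,a,\<alpha>3,op3,q3) \<in> trans M" and s3: "sat \<alpha>3 (apply_op op2 (apply_op op1 (\<lambda>_. {}) 1) 2) 3" and
    t4: "(q3,a,\<alpha>4,op4,q4) \<in> trans M" and s4: "sat \<alpha>4 (apply_op op3 (apply_op op2 (apply_op op1 (\<lambda>_. {}) 1) 2) 3) 2" and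
    f: "q4 \<in> final M"
    unfolding lang4 by blast
  define S2 where "S2 = apply_op op2 (apply_op op1 (\<lambda>_. {}) (1::nat)) 2"
  have S2sub: "\<And>i. S2 i \<subseteq> {1,2}" unfolding S2_def by (cases op1; cases op2) auto
  have S2uniq: "\<And>i k. 2 \<in> S2 i \<Longrightarrow> 2 \<in> S2 k \<Longrightarrow> i = k" unfolding S2_def by (cases op1; cases op2) (auto split: if_splits)
  define S3 where "S3 = apply_op op3 S2 3"
  have S3sub: "\<And>i. S3 i \<subseteq> {1,2,3}" unfolding S3_def using S2sub by (cases op3) auto
  have s4': "sat \<alpha>4 S3 2" using s4 unfolding S3_def S2_def .
  have s3': "sat \<alpha>3 S2 3" using s3 unfolding S2_def .
  note tt = t1 s1 t2 s2 t3 t4 f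
  show False
  proof (cases \<alpha>4)
    case (NotMem i)
    have "4 \<notin> S3 i" using S3sub[of i] by auto
    then have "[(a,1),(a,2),(a,3),(a,4)] \<in> lang M"
      unfolding lang4 using tt s3 NotMem unfolding S3_def S2_def by fastforce
    then show False unfolding L Lint_def by auto
  next
    case (Mem i)
    have "2 \<in> S3 i" using s4' Mem by simp
    then have i2: "2 \<in> S2 i" unfolding S3_def by (cases op3) (auto split: if_splits)
    show False
    proof (cases "1 \<in> S3 i")
      case True
      then have "[(a,1),(a,2),(a,3),(a,1)] \<in> lang M"
        unfolding lang4 using tt s3 Mem unfolding S3_def S2_def by fastforce
      then show False unfolding L Lint_def by auto
    next
      case False
      then have n1: "1 \<notin> S2 i" unfolding S3_def using apply_op_sub by metis
      show False
      proof (cases \<alpha>3)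
        case (Mem k)
        then show False using s3' S2sub[of k] by auto
      next
        case (NotMem k)
        show False
        proof (cases "1 \<in> S2 k")
          case False
          have "sat \<alpha>4 (apply_op op3 S2 1) 2" using Mem i2 apply_op_sub by auto
          then have "[(a,1),(a,2),(a,1),(a,2)] \<in> lang M"
            unfolding lang4 using tt NotMem False unfolding S2_def by fastforce
          then show False unfolding L Lint_def by auto
        next
          case True
          then have "k \<noteq> i" using n1 by auto
          then have "2 \<notin> S2 k" using S2uniq i2 by blast
          have "sat \<alpha>4 (apply_op op3 S2 2) 2" using Mem i2 apply_op_sub by auto
          then have "[(a,1),(a,2),(a,2),(a,2)] \<in> lang M"
            unfolding lang4 using tt NotMem \<open>2 \<notin> S2 k\<close> unfolding S2_def by fastforce
          then show False unfolding L Lint_def by auto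
        qed
      qed
    qed
  qed
qed

definition mk :: "(nat \<times> cond \<times> oper \<times> nat) set \<Rightarrow> 'a safa" where
  "mk T = \<lparr>states = {0..4}, init = 0, final = {4}, nsets = 1,
     trans = {(q,a,c,op,q'). (q,c,op,q') \<in> T}\<rparr>"

lemma run_len: "run (mk T) c w c' \<Longrightarrow> (\<forall>(q,x,y,q')\<in>T. q' = Suc q) \<Longrightarrow> fst c' = fst c + length w"
  by (induction rule: run.induct) (auto simp: mk_def)

lemma len4: assumes "w \<in> lang (mk T)" "\<forall>(q,x,y,q')\<in>T. q' = Suc q"
  shows "\<exists>a1 a2 a3 a4 x1 x2 x3 x4. w = [(a1,x1),(a2,x2),(a3,x3),(a4,x4)]"
proof -
  from assms obtain q S where "run (mk T) (0, \<lambda>_. {}) w (q,S)" "q = 4"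
    unfolding lang_def by (auto simp: mk_def)
  with run_len[OF this(1) assms(2)] have "length w = 4" by simp
  then show ?thesis
    by (auto simp: numeral_eq_Suc length_Suc_conv)
qed

definition T1 :: "(nat \<times> cond \<times> oper \<times> nat) set" where
  "T1 = {(0,NotMem 0,Ins 0,1),(1,NotMem 0,Ins 0,2),(2,NotMem 0,NoOp,3),(3,NotMem 0,NoOp,4),(3,Mem 0,NoOp,4)}"
definition T2 :: "(nat \<times> cond \<times> oper \<times> nat) set" where
  "T2 = {(0,NotMem 0,NoOp,1),(1,NotMem 0,Ins 0,2),(2,NotMem 0,NoOp,3),(2,Mem 0,NoOp,3),(3,Mem 0,NoOp,4)}"

definition L1 :: "'a dword set" where
  "L1 = {w. \<exists>a1 a2 a3 a4 x1 x2 x3 x4. w = [(a1,x1),(a2,x2),(a3,x3),(a4,x4)] \<and>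
      x1 \<noteq> x2 \<and> x3 \<noteq> x1 \<and> x3 \<noteq> x2}"
definition L2 :: "'a dword set" where
  "L2 = {w. \<exists>a1 a2 a3 a4 x1 x2 x3 x4. w = [(a1,x1),(a2,x2),(a3,x3),(a4,x4)] \<and> x4 = x2}"

lemma wf_mk: "(\<forall>(q,c,op,q')\<in>T. q \<le> 4 \<and> q' \<le> 4 \<and> cond_idx c < 1 \<and> oper_ok 1 op) \<Longrightarrow> wf_safa (mk T :: ('a::finite) safa)"
  unfolding wf_safa_def mk_def by auto

lemma rec1: "safa_recognizable (L1 :: ('a::finite) dword set)"
  unfolding safa_recognizable_def
proof (intro exI conjI)
  show "wf_safa (mk T1 :: 'a safa)" by (rule wf_mk) (auto simp: T1_def)
  show "lang (mk T1 :: 'a safa) = L1"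
  proof (rule set_eqI, rule iffI)
    fix w assume w: "w \<in> lang (mk T1 :: 'a safa)"
    then obtain a1 a2 a3 a4 x1 x2 x3 x4 where e: "w = [(a1,x1),(a2,x2),(a3,x3),(a4,x4)]"
      using len4[of w T1] by (auto simp: T1_def)
    show "w \<in> L1" using w unfolding e lang4 by (auto simp: L1_def mk_def T1_def)
  next
    fix w assume "w \<in> (L1 :: 'a dword set)"
    then obtain a1 a2 a3 a4 x1 x2 x3 x4 where e: "w = [(a1,x1),(a2,x2),(a3,x3),(a4,x4)]"
      and c: "x1 \<noteq> x2" "x3 \<noteq> x1" "x3 \<noteq> x2" unfolding L1_def by blast
    show "w \<in> lang (mk T1)" unfolding e lang4 using c
      by (cases "x4 = x1 \<or> x4 = x2") (auto simp: mk_def T1_def)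
  qed
qed

lemma rec2: "safa_recognizable (L2 :: ('a::finite) dword set)"
  unfolding safa_recognizable_def
proof (intro exI conjI)
  show "wf_safa (mk T2 :: 'a safa)" by (rule wf_mk) (auto simp: T2_def)
  show "lang (mk T2 :: 'a safa) = L2"
  proof (rule set_eqI, rule iffI)
    fix w assume w: "w \<in> lang (mk T2 :: 'a safa)"
    then obtain a1 a2 a3 a4 x1 x2 x3 x4 where e: "w = [(a1,x1),(a2,x2),(a3,x3),(a4,x4)]"
      using len4[of w T2] by (auto simp: T2_def)
    show "w \<in> L2" using w unfolding e lang4 by (auto simp: L2_def mk_def T2_def)
  next
    fix w assume "w \<in> (L2 :: 'a dword set)"
    then obtain a1 a2 a3 a4 x1 x2 x3 x4 where e: "w = [(a1,x1),(a2,x2),(a3,x3),(a4,x4)]"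
      and c: "x4 = x2" unfolding L2_def by blast
    show "w \<in> lang (mk T2)" unfolding e lang4 using c
      apply (cases "x3 = x2")
       apply (auto simp: mk_def T2_def)
      apply (rule exI[of _ "Mem 0"]; simp)
     apply (rule exI[of _ "NotMem 0"]; simp)
     done
  qed
qed

theorem lemma6:
  "\<exists>L1 L2 :: ('a::finite) dword set.
     safa_recognizable L1 \<and> safa_recognizable L2 \<and> \<not> safa_recognizable (L1 \<inter> L2)"
proof (intro exI conjI)
  have "(L1 :: 'a dword set) \<inter> L2 = Lint" unfolding L1_def L2_def Lint_def by auto
  then show "\<not> safa_recognizable ((L1 :: 'a dword set) \<inter> L2)" using not_rec by simp
qed (rule rec1, rule rec2)

end
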